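(* In the setting of the context, $N$ is isomorphic to the permutation module $k[U_3/H_2]$, and its socle is spanned by $d_1^2=x^2$. Also, $K$ is isomorphic to the permutation module $k[U_3/H_1]$, and its socle is spanned by $d_2=y^2+xy$.
   Context: Let $k=\mathbb{F}_2$ and let $U_3\cong D_8$ be the group of upper unitriangular $3\times 3$ matrices over $\mathbb{F}_2$. The group $U_3$ acts on the polynomial ring $k[x,y,z]$ by graded algebra automorphisms. Its action on the degree-one part $M=\langle x,y,z\rangle$ is the natural module, and it preserves the flag $\langle x\rangle\subset\langle x,y\rangle\subset\langle x,y,z\rangle$. Let $b,c,d\in U_3$ be the elements defined as follows: - $b$ sends $y\mapsto y+x$ and fixes $x,z$; - $c$ sends $z\mapsto z+x$ and fixes $x,y$; - $d$ sends $z\mapsto z+y$ and fixes $x,y$. Let $H_1=\langle b,c\rangle$ and $H_2=\langle d\rangle$. Put $d_1=x$ and $d_2=y^2+xy$. Let $N$ be the $kU_3$-submodule of $k[x,y,z]$ generated by $\phi=z^2+yz$, and let $K$ be the $kU_3$-submodule generated by $\theta=z^2+xz$. *)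

theory Defs
  imports "HOL-Library.Poly_Mapping" "HOL-Library.Z2" "HOL-Library.Product_Plus"
begin

text \<open>The field k = F_2 is the type bit.  The polynomial ring k[x,y,z] is modelled as
finitely supported maps from exponent triples (a,b,c) (standing for x^a y^b z^c) to bit.\<close>

type_synonym kpoly = "(nat \<times> nat \<times> nat) \<Rightarrow>\<^sub>0 bit"

text \<open>3x3 matrices over F_2, indices 0,1,2; entries outside this range are 0.\<close>
type_synonym mat3 = "nat \<Rightarrow> nat \<Rightarrow> bit"

definition Cst :: "bit \<Rightarrow> kpoly" where
  "Cst c = Poly_Mapping.single (0,0,0) c"

definition smult :: "bit \<Rightarrow> kpoly \<Rightarrow> kpoly" where
  "smult c p = Cst c * p"

definition px :: kpoly where "px = Poly_Mapping.single (1,0,0) 1"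
definition py :: kpoly where "py = Poly_Mapping.single (0,1,0) 1"
definition pz :: kpoly where "pz = Poly_Mapping.single (0,0,1) 1"

definition var :: "nat \<Rightarrow> kpoly" where
  "var i = (if i = 0 then px else if i = 1 then py else pz)"

definition mmul :: "mat3 \<Rightarrow> mat3 \<Rightarrow> mat3" where
  "mmul g h = (\<lambda>i j. \<Sum>k<3. g i k * h k j)"

definition one3 :: mat3 where
  "one3 = (\<lambda>i j. if i = j \<and> i < 3 then 1 else 0)"

definition U3 :: "mat3 set" where
  "U3 = {g. (\<forall>i j. (3 \<le> i \<or> 3 \<le> j) \<longrightarrow> g i j = 0) \<and> (\<forall>i<3. g i i = 1)
           \<and> (\<forall>i<3. \<forall>j<i. g i j = 0)}"

text \<open>Action on degree one: g sends the j-th variable to sum_i g_ij (i-th variable);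
this is the natural module, preserving the flag <x> < <x,y> < <x,y,z>.\<close>
definition lin :: "mat3 \<Rightarrow> nat \<Rightarrow> kpoly" where
  "lin g j = (\<Sum>i<3. Cst (g i j) * var i)"

definition act :: "mat3 \<Rightarrow> kpoly \<Rightarrow> kpoly" where
  "act g p = (\<Sum>m\<in>Poly_Mapping.keys p.
      Cst (Poly_Mapping.lookup p m) * lin g 0 ^ fst m * lin g 1 ^ fst (snd m) * lin g 2 ^ snd (snd m))"

definition elt_b :: mat3 where
  "elt_b = (\<lambda>i j. one3 i j + (if i = 0 \<and> j = 1 then 1 else 0))"
definition elt_c :: mat3 where
  "elt_c = (\<lambda>i j. one3 i j + (if i = 0 \<and> j = 2 then 1 else 0))"
definition elt_d :: mat3 where
  "elt_d = (\<lambda>i j. one3 i j + (if i = 1 \<and> j = 2 then 1 else 0))"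

text \<open>Subgroup generated by a subset of the finite group U3.\<close>
inductive_set gen :: "mat3 set \<Rightarrow> mat3 set" for S where
  gen_one: "one3 \<in> gen S"
| gen_mul: "s \<in> S \<Longrightarrow> h \<in> gen S \<Longrightarrow> mmul s h \<in> gen S"

definition H1 :: "mat3 set" where "H1 = gen {elt_b, elt_c}"
definition H2 :: "mat3 set" where "H2 = gen {elt_d}"

definition d1 :: kpoly where "d1 = px"
definition d2 :: kpoly where "d2 = py ^ 2 + px * py"
definition phi :: kpoly where "phi = pz ^ 2 + py * pz"
definition theta :: kpoly where "theta = pz ^ 2 + px * pz"

inductive_set subgen :: "kpoly \<Rightarrow> kpoly set" for v where
  sg_gen: "v \<in> subgen v"
| sg_zero: "0 \<in> subgen v"
| sg_add: "u \<in> subgen v \<Longrightarrow> w \<in> subgen v \<Longrightarrow> u + w \<in> subgen v"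
| sg_smult: "u \<in> subgen v \<Longrightarrow> smult c u \<in> subgen v"
| sg_act: "g \<in> U3 \<Longrightarrow> u \<in> subgen v \<Longrightarrow> act g u \<in> subgen v"

definition modN :: "kpoly set" where "modN = subgen phi"
definition modK :: "kpoly set" where "modK = subgen theta"

definition is_submod :: "kpoly set \<Rightarrow> bool" where
  "is_submod W \<longleftrightarrow> 0 \<in> W \<and> (\<forall>u\<in>W. \<forall>w\<in>W. u + w \<in> W) \<and> (\<forall>c. \<forall>u\<in>W. smult c u \<in> W)
     \<and> (\<forall>g\<in>U3. \<forall>u\<in>W. act g u \<in> W)"

definition simple_submod :: "kpoly set \<Rightarrow> bool" where
  "simple_submod S \<longleftrightarrow> is_submod S \<and> S \<noteq> {0} \<and>
     (\<forall>T. is_submod T \<and> T \<subseteq> S \<longrightarrow> T = {0} \<or> T = S)"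

inductive_set socle :: "kpoly set \<Rightarrow> kpoly set" for V where
  soc_zero: "0 \<in> socle V"
| soc_add: "simple_submod S \<Longrightarrow> S \<subseteq> V \<Longrightarrow> u \<in> S \<Longrightarrow> w \<in> socle V \<Longrightarrow> u + w \<in> socle V"

text \<open>Permutation module k[U3/H]: k-valued functions on the set of left cosets gH,
with g acting by (g.f)(gC) = f(C).\<close>
definition lcosets :: "mat3 set \<Rightarrow> mat3 set set" where
  "lcosets H = {(mmul g) ` H | g. g \<in> U3}"

definition permmod :: "mat3 set \<Rightarrow> (mat3 set \<Rightarrow> bit) set" where
  "permmod H = {f. \<forall>C. C \<notin> lcosets H \<longrightarrow> f C = 0}"

definition iso_perm :: "kpoly set \<Rightarrow> mat3 set \<Rightarrow> bool" where
  "iso_perm V H \<longleftrightarrow> (\<exists>\<Phi>. bij_betw \<Phi> V (permmod H)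
     \<and> (\<forall>u\<in>V. \<forall>w\<in>V. \<Phi> (u + w) = (\<lambda>C. \<Phi> u C + \<Phi> w C))
     \<and> (\<forall>c. \<forall>u\<in>V. \<Phi> (smult c u) = (\<lambda>C. c * \<Phi> u C))
     \<and> (\<forall>g\<in>U3. \<forall>u\<in>V. \<forall>C\<in>lcosets H. \<Phi> (act g u) ((mmul g) ` C) = \<Phi> u C))"

end

theory Submission
  imports Defs
begin


lemma bit_eq0: "((a::bit) = 0) = (\<not> a = 1)" by simp
lemmas bsimps = bit_eq0
declare bit_not_one_iff[simp del] bit_not_zero_iff[simp del]
lemma bt1: "(a::bit) + b + a*c = b + a*(c+1)" by (simp add: bit_eq0; argo)
lemma bt2: "((1+(b+a*c))*(1+a)*s + p + (1 + (b+a*c))*r + a*q :: bit) = p + ((1+(b+a*c))*(1+a)*s + (1 + (b+a*c))*r + a*q)" by (simp add: bit_eq0; argo)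

definition mk :: "bit \<Rightarrow> bit \<Rightarrow> bit \<Rightarrow> mat3" where
 "mk a b c = (\<lambda>i j. if i < 3 \<and> j < 3 then (if i = j then 1 else if i = 0 \<and> j = 1 then a
    else if i = 0 \<and> j = 2 then b else if i = 1 \<and> j = 2 then c else 0) else 0)"

lemma mk_inj: "mk a b c = mk a' b' c' \<longleftrightarrow> a = a' \<and> b = b' \<and> c = c'"
proof
  assume h: "mk a b c = mk a' b' c'"
  have "mk a b c 0 1 = mk a' b' c' 0 1" "mk a b c 0 2 = mk a' b' c' 0 2" "mk a b c 1 2 = mk a' b' c' 1 2"
    using h by auto
  then show "a = a' \<and> b = b' \<and> c = c'" by (simp add: mk_def)
qed auto

lemma sum3: "(\<Sum>k<(3::nat). f k) = f 0 + f 1 + (f 2::'a::comm_monoid_add)"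
  by (simp add: numeral_3_eq_3 lessThan_Suc numeral_2_eq_2 add_ac)

lemma mk_mul: "mmul (mk a b c) (mk a' b' c') = mk (a+a') (b+b'+a*c') (c+c')"
  unfolding mmul_def sum3
  by (rule ext)+ (auto simp: mk_def)

lemma U3_mk: "U3 = {mk a b c | a b c. True}"
proof
  show "U3 \<subseteq> {mk a b c | a b c. True}"
  proof
    fix g assume g: "g \<in> U3"
    have "g = mk (g 0 1) (g 0 2) (g 1 2)"
    proof (rule ext, rule ext)
      fix i j
      show "g i j = mk (g 0 1) (g 0 2) (g 1 2) i j"
        using g unfolding U3_def mk_def
        by (cases "i < 3"; cases "j < 3"; auto simp: less_Suc_eq numeral_3_eq_3)
    qed
    then show "g \<in> {mk a b c | a b c. True}" by blast
  qed
  show "{mk a b c | a b c. True} \<subseteq> U3"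
    by (auto simp: U3_def mk_def)
qed



declare add_bit_eq_xor[simp del] mult_bit_eq_and[simp del]

lemma zero3: "(0::nat\<times>nat\<times>nat) = (0,0,0)" by (simp add: zero_prod_def)
lemma Cst_0[simp]: "Cst 0 = 0" by (simp add: Cst_def)
lemma Cst_1[simp]: "Cst 1 = 1" by (simp add: Cst_def flip: zero3)
lemma Cst_add: "Cst (a + b) = Cst a + Cst b" by (simp add: Cst_def single_add)
lemma Cst_mult: "Cst (a * b) = Cst a * Cst b" by (simp add: Cst_def mult_single)
lemma two_kp: "(2::kpoly) = 0"
proof -
  have "Cst 2 = (2::kpoly)" by (simp only: Cst_def zero3[symmetric] single_numeral)
  moreover have "Cst 2 = 0" by simp
  ultimately show ?thesis by simp
qed
lemma Cst_single: "Cst c * Poly_Mapping.single m d = Poly_Mapping.single m (c*d)"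
  by (simp add: Cst_def mult_single flip: zero3)

definition Q :: "bit \<Rightarrow> bit \<Rightarrow> bit \<Rightarrow> bit \<Rightarrow> bit \<Rightarrow> bit \<Rightarrow> kpoly" where
  "Q p1 p2 p3 p4 p5 p6 = Poly_Mapping.single (2,0,0) p1 + Poly_Mapping.single (1,1,0) p2
    + Poly_Mapping.single (1,0,1) p3 + Poly_Mapping.single (0,2,0) p4
    + Poly_Mapping.single (0,1,1) p5 + Poly_Mapping.single (0,0,2) p6"

lemma Q_add: "Q p1 p2 p3 p4 p5 p6 + Q q1 q2 q3 q4 q5 q6 = Q (p1+q1) (p2+q2) (p3+q3) (p4+q4) (p5+q5) (p6+q6)"
  unfolding Q_def single_add by (simp add: add_ac)

lemma Q_cmul: "Cst c * Q p1 p2 p3 p4 p5 p6 = Q (c*p1) (c*p2) (c*p3) (c*p4) (c*p5) (c*p6)"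
  unfolding Q_def by (simp add: distrib_left Cst_single)

lemma Q_0: "Q 0 0 0 0 0 0 = 0" by (simp add: Q_def)

lemma lookup_Q:
  "Poly_Mapping.lookup (Q p1 p2 p3 p4 p5 p6) (2,0,0) = p1"
  "Poly_Mapping.lookup (Q p1 p2 p3 p4 p5 p6) (1,1,0) = p2"
  "Poly_Mapping.lookup (Q p1 p2 p3 p4 p5 p6) (1,0,1) = p3"
  "Poly_Mapping.lookup (Q p1 p2 p3 p4 p5 p6) (0,2,0) = p4"
  "Poly_Mapping.lookup (Q p1 p2 p3 p4 p5 p6) (0,1,1) = p5"
  "Poly_Mapping.lookup (Q p1 p2 p3 p4 p5 p6) (0,0,2) = p6"
  by (simp_all add: Q_def lookup_add lookup_single)

lemma Q_inj: "Q p1 p2 p3 p4 p5 p6 = Q q1 q2 q3 q4 q5 q6 \<longleftrightarrow>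
   p1 = q1 \<and> p2 = q2 \<and> p3 = q3 \<and> p4 = q4 \<and> p5 = q5 \<and> p6 = q6"
  by (metis lookup_Q)

lemma mons:
  "px * px = Poly_Mapping.single (2,0,0) 1"
  "px * py = Poly_Mapping.single (1,1,0) 1"
  "px * pz = Poly_Mapping.single (1,0,1) 1"
  "py * py = Poly_Mapping.single (0,2,0) 1"
  "py * pz = Poly_Mapping.single (0,1,1) 1"
  "pz * pz = Poly_Mapping.single (0,0,2) 1"
  by (simp_all add: px_def py_def pz_def mult_single numeral_2_eq_2)

lemma Q_alt: "Q p1 p2 p3 p4 p5 p6 = Cst p1 * (px*px) + Cst p2 * (px*py) + Cst p3 * (px*pz)
   + Cst p4 * (py*py) + Cst p5 * (py*pz) + Cst p6 * (pz*pz)"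
  unfolding mons Cst_single by (simp add: Q_def)

lemma act_superset:
  assumes "finite S" "Poly_Mapping.keys p \<subseteq> S"
  shows "act g p = (\<Sum>m\<in>S. Cst (Poly_Mapping.lookup p m) * lin g 0 ^ fst m * lin g 1 ^ fst (snd m) * lin g 2 ^ snd (snd m))"
  unfolding act_def
  by (rule sum.mono_neutral_left[OF assms]) (auto simp: in_keys_iff)

lemma act_add: "act g (p + q) = act g p + act g q"
proof -
  let ?S = "Poly_Mapping.keys p \<union> Poly_Mapping.keys q"
  have f: "finite ?S" by simp
  show ?thesis
    apply (subst act_superset[OF f keys_add])
    apply (subst act_superset[OF f, of p], blast)
    apply (subst act_superset[OF f, of q], blast)
    apply (simp add: lookup_add Cst_add distrib_right sum.distrib)
    done
qed

lemma act_single: "act g (Poly_Mapping.single m c) = Cst c * lin g 0 ^ fst m * lin g 1 ^ fst (snd m) * lin g 2 ^ snd (snd m)"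
  by (subst act_superset[of "{m}"]) auto

lemma lin_mk:
  "lin (mk a b c) 0 = px"
  "lin (mk a b c) 1 = Cst a * px + py"
  "lin (mk a b c) 2 = Cst b * px + Cst c * py + pz"
  by (simp_all add: lin_def sum3 var_def mk_def)

lemma sq_add: "((u::kpoly) + v) * (u + v) = u * u + v * v"
proof -
  have "(u + v) * (u + v) = u*u + v*v + 2 * (u*v)" by (simp add: algebra_simps)
  then show ?thesis by (simp add: two_kp)
qed

lemma monQ:
  "px * (Cst a * px + py) = Q a 1 0 0 0 0"
  "px * (Cst b * px + Cst c * py + pz) = Q b c 1 0 0 0"
  "(Cst a * px + py) * (Cst a * px + py) = Q (a*a) 0 0 1 0 0"
  "(Cst a * px + py) * (Cst b * px + Cst c * py + pz) = Q (a*b) (a*c+b) a c 1 0"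
  "(Cst b * px + Cst c * py + pz) * (Cst b * px + Cst c * py + pz) = Q (b*b) 0 0 (c*c) 0 1"
  "px * px = Q 1 0 0 0 0 0"
  unfolding Q_alt Cst_add Cst_mult Cst_0 Cst_1 sq_add by (simp_all add: algebra_simps)

lemma act_mk_Q: "act (mk a b c) (Q p1 p2 p3 p4 p5 p6) =
  Q (p1 + a*p2 + b*p3 + a*a*p4 + a*b*p5 + b*b*p6) (p2 + c*p3 + (a*c+b)*p5) (p3 + a*p5)
    (p4 + c*p5 + c*c*p6) p5 p6"
proof -
  have "act (mk a b c) (Q p1 p2 p3 p4 p5 p6) = Cst p1 * (px*px) + Cst p2 * (px * (Cst a * px + py))
    + Cst p3 * (px * (Cst b * px + Cst c * py + pz)) + Cst p4 * ((Cst a * px + py) * (Cst a * px + py))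
    + Cst p5 * ((Cst a * px + py) * (Cst b * px + Cst c * py + pz))
    + Cst p6 * ((Cst b * px + Cst c * py + pz) * (Cst b * px + Cst c * py + pz))"
    unfolding Q_def act_add act_single lin_mk by (simp add: power2_eq_square mult.assoc numeral_2_eq_2)
  also have "\<dots> = Q (p1 + a*p2 + b*p3 + a*a*p4 + a*b*p5 + b*b*p6) (p2 + c*p3 + (a*c+b)*p5) (p3 + a*p5)
    (p4 + c*p5 + c*c*p6) p5 p6"
    unfolding monQ Q_cmul Q_add Q_inj by (simp add: algebra_simps)
  finally show ?thesis .
qed



lemmas bitdec = bit_eq0 add_bit_eq_xor mult_bit_eq_and

lemma mk_entries[simp]: "mk a b c 0 1 = a" "mk a b c 0 2 = b" "mk a b c 1 2 = c"
  by (simp_all add: mk_def)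

lemma one3_mk: "one3 = mk 0 0 0"
  by (rule ext)+ (auto simp: one3_def mk_def)
lemma elts_mk: "elt_b = mk 1 0 0" "elt_c = mk 0 1 0" "elt_d = mk 0 0 1"
  by ((rule ext)+, auto simp: elt_b_def elt_c_def elt_d_def one3_def mk_def)+

lemma mk_in_U3[simp]: "mk a b c \<in> U3" by (auto simp: U3_mk)

lemma H2_eq: "H2 = {mk 0 0 0, mk 0 0 1}"
proof
  show "H2 \<subseteq> {mk 0 0 0, mk 0 0 1}"
  proof
    fix h assume "h \<in> H2"
    then show "h \<in> {mk 0 0 0, mk 0 0 1}" unfolding H2_def
      by (induction rule: gen.induct) (auto simp: one3_mk elts_mk mk_mul)
  qed
  have "mk 0 0 0 \<in> H2" unfolding H2_def one3_mk[symmetric] by (rule gen_one)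
  moreover have "mmul elt_d one3 \<in> H2" unfolding H2_def by (rule gen_mul) (auto intro: gen_one)
  ultimately show "{mk 0 0 0, mk 0 0 1} \<subseteq> H2" by (simp add: one3_mk elts_mk mk_mul)
qed

lemma H1_eq: "H1 = {mk x y 0 | x y. True}"
proof
  show "H1 \<subseteq> {mk x y 0 | x y. True}"
  proof
    fix h assume "h \<in> H1"
    then show "h \<in> {mk x y 0 | x y. True}" unfolding H1_def
    proof (induction rule: gen.induct)
      case gen_one then show ?case by (auto simp: one3_mk)
    next
      case (gen_mul s h)
      then obtain x y where h: "h = mk x y 0" by blast
      from gen_mul.hyps(1) have "s = mk 1 0 0 \<or> s = mk 0 1 0" by (simp add: elts_mk)
      then show ?case
      proof
        assume "s = mk 1 0 0"
        then have "mmul s h = mk (1+x) y 0" by (simp add: h mk_mul)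
        then show ?thesis by blast
      next
        assume "s = mk 0 1 0"
        then have "mmul s h = mk x (1+y) 0" by (simp add: h mk_mul)
        then show ?thesis by blast
      qed
    qed
  qed
  have o: "one3 \<in> H1" unfolding H1_def by (rule gen_one)
  have b: "mmul elt_b one3 \<in> H1" unfolding H1_def by (rule gen_mul) (auto intro: gen_one)
  have c: "mmul elt_c one3 \<in> H1" unfolding H1_def by (rule gen_mul) (auto intro: gen_one)
  have bc: "mmul elt_b (mmul elt_c one3) \<in> H1" unfolding H1_def
    by (rule gen_mul, simp, rule gen_mul) (auto intro: gen_one)
  show "{mk x y 0 | x y. True} \<subseteq> H1"
  proof
    fix g assume "g \<in> {mk x y 0 | x y. True}"
    then obtain x y where g: "g = mk x y 0" by blast
    show "g \<in> H1" using o b c bc unfolding g one3_mk elts_mk mk_mul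
      by (cases x; cases y) simp_all
  qed
qed

definition cos2 :: "bit \<Rightarrow> bit \<Rightarrow> bit \<Rightarrow> mat3 set" where
  "cos2 a b c = {mk a b c, mk a (b+a) (c+1)}"

lemma coset_H2: "mmul (mk a b c) ` H2 = cos2 a b c"
  by (simp add: H2_eq cos2_def mk_mul)

lemma lcosets_H2: "lcosets H2 = {cos2 a b c | a b c. True}"
  unfolding lcosets_def U3_mk by (auto simp: coset_H2; metis coset_H2)

definition cos1 :: "bit \<Rightarrow> mat3 set" where
  "cos1 c = {mk x y c | x y. True}"

lemma coset_H1: "mmul (mk a b c) ` H1 = cos1 c"
proof
  show "mmul (mk a b c) ` H1 \<subseteq> cos1 c" by (auto simp: H1_eq cos1_def mk_mul; blast)
  show "cos1 c \<subseteq> mmul (mk a b c) ` H1"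
  proof
    fix g assume "g \<in> cos1 c"
    then obtain x y where g: "g = mk x y c" by (auto simp: cos1_def)
    have "g = mmul (mk a b c) (mk (x+a) (y+b) 0)" unfolding g mk_mul mk_inj
      by (simp add: bitdec; argo)
    then show "g \<in> mmul (mk a b c) ` H1" by (auto simp: H1_eq)
  qed
qed

lemma lcosets_H1: "lcosets H1 = {cos1 c | c. True}"
  unfolding lcosets_def U3_mk by (auto simp: coset_H1; metis coset_H1)

lemma cos1_inj: "cos1 c = cos1 c' \<longleftrightarrow> c = c'"
proof
  assume h: "cos1 c = cos1 c'"
  have "mk 0 0 c \<in> cos1 c" by (auto simp: cos1_def)
  then have "mk 0 0 c \<in> cos1 c'" using h by simp
  then obtain x y where "mk 0 0 c = mk x y c'" by (auto simp: cos1_def)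
  then show "c = c'" by (simp add: mk_inj)
qed simp

lemma act_zero[simp]: "act g 0 = 0" by (simp add: act_def)
lemma smult_0[simp]: "smult 0 u = 0" by (simp add: smult_def)
lemma smult_1[simp]: "smult 1 u = u" by (simp add: smult_def)
lemma self_add: "(u::kpoly) + u = 0"
  by (metis mult_2 two_kp mult_zero_left)

lemma socle_gen:
  assumes V0: "0 \<in> V" and x0V: "x0 \<in> V" and nz: "x0 \<noteq> 0" and fx: "\<forall>g\<in>U3. act g x0 = x0"
    and key: "\<And>W u. is_submod W \<Longrightarrow> u \<in> W \<Longrightarrow> u \<in> V \<Longrightarrow> u \<noteq> 0 \<Longrightarrow> x0 \<in> W"
  shows "socle V = {smult c x0 | c. True}"
proof -
  have SX: "{smult c x0 | c. True} = {0, x0}"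
  proof
    show "{smult c x0 | c. True} \<subseteq> {0, x0}"
    proof
      fix u assume "u \<in> {smult c x0 | c. True}"
      then obtain c where "u = smult c x0" by blast
      then show "u \<in> {0, x0}" by (cases c) auto
    qed
    have "0 = smult 0 x0" "x0 = smult 1 x0" by simp_all
    then show "{0, x0} \<subseteq> {smult c x0 | c. True}" by blast
  qed
  have addc: "u + w \<in> {0, x0}" if "u \<in> {0, x0}" "w \<in> {0, x0}" for u w
    using that self_add[of x0] by auto
  have sub: "is_submod {0, x0}"
    unfolding is_submod_def
  proof (intro conjI ballI allI)
    show "0 \<in> {0, x0}" by simp
    show "u + w \<in> {0, x0}" if "u \<in> {0, x0}" "w \<in> {0, x0}" for u w using addc that .
    show "smult c u \<in> {0, x0}" if "u \<in> {0, x0}" for c u using that by (cases c) auto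
    show "act g u \<in> {0, x0}" if "g \<in> U3" "u \<in> {0, x0}" for g u using that fx by auto
  qed
  have simple: "simple_submod {0, x0}"
    unfolding simple_submod_def
  proof (intro conjI allI impI)
    show "is_submod {0, x0}" by (rule sub)
    show "{0, x0} \<noteq> {0}" using nz by auto
    fix T assume T: "is_submod T \<and> T \<subseteq> {0, x0}"
    then have "0 \<in> T" by (simp add: is_submod_def)
    then show "T = {0} \<or> T = {0, x0}" using T by blast
  qed
  show ?thesis unfolding SX
  proof
    show "socle V \<subseteq> {0, x0}"
    proof
      fix u assume "u \<in> socle V"
      then show "u \<in> {0, x0}"
      proof (induction rule: socle.induct)
        case soc_zero then show ?case by simp
      next
        case (soc_add S u w)
        have Ssub: "is_submod S" using soc_add.hyps(1) by (simp add: simple_submod_def)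
        have "u \<in> {0, x0}"
        proof (cases "u = 0")
          case False
          then have "x0 \<in> S" using key[OF Ssub soc_add.hyps(3)] soc_add.hyps(2,3) by blast
          moreover have "0 \<in> S" using Ssub by (simp add: is_submod_def)
          ultimately have "{0, x0} \<subseteq> S" by blast
          then have "{0, x0} = {0} \<or> {0, x0} = S"
            using soc_add.hyps(1) sub unfolding simple_submod_def by blast
          then have "S = {0, x0}" using nz by auto
          then show ?thesis using soc_add.hyps(3) by simp
        qed simp
        then show ?case using addc soc_add.IH by blast
      qed
    qed
    show "{0, x0} \<subseteq> socle V"
    proof -
      have "0 \<in> socle V" by (rule soc_zero)
      moreover have "x0 + 0 \<in> socle V"
        by (rule soc_add[OF simple]) (auto simp: V0 x0V intro: soc_zero)
      ultimately show ?thesis by simp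
    qed
  qed
qed



lemma Q_zeros: "Q 0 0 0 0 0 0 = 0" by (rule Q_0)

lemma phi_Q: "phi = Q 0 0 0 0 1 1"
  by (simp add: phi_def power2_eq_square mons Q_def)
lemma theta_Q: "theta = Q 0 0 1 0 0 1"
  by (simp add: theta_def power2_eq_square mons Q_def)
lemma d1sq_Q: "d1 ^ 2 = Q 1 0 0 0 0 0"
  by (simp add: d1_def power2_eq_square mons Q_def)
lemma d2_Q: "d2 = Q 0 1 0 1 0 0"
  by (simp add: d2_def power2_eq_square mons Q_def)
lemma smult_Q: "smult c (Q p1 p2 p3 p4 p5 p6) = Q (c*p1) (c*p2) (c*p3) (c*p4) (c*p5) (c*p6)"
  by (simp add: smult_def Q_cmul)

lemma U3_cases: "g \<in> U3 \<Longrightarrow> (\<And>a b c. g = mk a b c \<Longrightarrow> P) \<Longrightarrow> P"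
  by (auto simp: U3_mk)

lemma modN_eq: "modN = {Q p q r 0 s s | p q r s. True}"
proof
  show "modN \<subseteq> {Q p q r 0 s s | p q r s. True}"
  proof
    fix u assume "u \<in> modN"
    then show "u \<in> {Q p q r 0 s s | p q r s. True}" unfolding modN_def
    proof (induction rule: subgen.induct)
      case sg_gen then show ?case by (auto simp: phi_Q)
    next
      case sg_zero
      have "0 = Q 0 0 0 0 0 0" by (simp add: Q_zeros)
      then show ?case by blast
    next
      case (sg_add u w)
      then obtain p q r s p' q' r' s' where "u = Q p q r 0 s s" "w = Q p' q' r' 0 s' s'" by blast
      then have "u + w = Q (p+p') (q+q') (r+r') 0 (s+s') (s+s')" by (simp add: Q_add)
      then show ?case by blast
    next
      case (sg_smult u c)
      then obtain p q r s where "u = Q p q r 0 s s" by blast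
      then have "smult c u = Q (c*p) (c*q) (c*r) 0 (c*s) (c*s)" by (simp add: smult_Q)
      then show ?case by blast
    next
      case (sg_act g u)
      then obtain p q r s where u: "u = Q p q r 0 s s" by blast
      obtain a b c where g: "g = mk a b c" using sg_act.hyps(1) by (rule U3_cases)
      have "act g u = Q (p + a*q + b*r + a*a*0 + a*b*s + b*b*s) (q + c*r + (a*c+b)*s) (r + a*s) 0 s s"
        unfolding g u act_mk_Q Q_inj by (simp add: bitdec; argo)
      then show ?case by blast
    qed
  qed
  show "{Q p q r 0 s s | p q r s. True} \<subseteq> modN"
  proof
    fix u assume "u \<in> {Q p q r 0 s s | p q r s. True}"
    then obtain p q r s where u: "u = Q p q r 0 s s" by blast
    have m: "act (mk a b c) phi \<in> subgen phi" for a b c by (rule sg_act) (simp_all add: sg_gen)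
    let ?E1 = "act (mk 0 0 0) phi" and ?E2 = "act (mk 0 1 0) phi" and ?E3 = "act (mk 1 0 0) phi"
      and ?E4 = "act (mk 1 1 0) phi"
    have "smult s ?E1 + (smult p (?E1 + ?E2 + ?E3 + ?E4) + (smult q (?E3 + ?E4) + smult r (?E1 + ?E3)))
      \<in> subgen phi" by (intro sg_add sg_smult m)
    moreover have "smult s ?E1 + (smult p (?E1 + ?E2 + ?E3 + ?E4) + (smult q (?E3 + ?E4) + smult r (?E1 + ?E3)))
      = u" unfolding u phi_Q act_mk_Q Q_add smult_Q Q_inj by (simp add: bitdec; argo)
    ultimately show "u \<in> modN" unfolding modN_def by simp
  qed
qed

lemma modK_eq: "modK = {Q 0 q r q 0 r | q r. True}"
proof
  show "modK \<subseteq> {Q 0 q r q 0 r | q r. True}"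
  proof
    fix u assume "u \<in> modK"
    then show "u \<in> {Q 0 q r q 0 r | q r. True}" unfolding modK_def
    proof (induction rule: subgen.induct)
      case sg_gen then show ?case by (auto simp: theta_Q)
    next
      case sg_zero
      have "0 = Q 0 0 0 0 0 0" by (simp add: Q_zeros)
      then show ?case by blast
    next
      case (sg_add u w)
      then obtain q r q' r' where "u = Q 0 q r q 0 r" "w = Q 0 q' r' q' 0 r'" by blast
      then have "u + w = Q 0 (q+q') (r+r') (q+q') 0 (r+r')" by (simp add: Q_add)
      then show ?case by blast
    next
      case (sg_smult u c)
      then obtain q r where "u = Q 0 q r q 0 r" by blast
      then have "smult c u = Q 0 (c*q) (c*r) (c*q) 0 (c*r)" by (simp add: smult_Q)
      then show ?case by blast
    next
      case (sg_act g u)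
      then obtain q r where u: "u = Q 0 q r q 0 r" by blast
      obtain a b c where g: "g = mk a b c" using sg_act.hyps(1) by (rule U3_cases)
      have "act g u = Q 0 (q + c*r) r (q + c*r) 0 r"
        unfolding g u act_mk_Q Q_inj by (simp add: bitdec; argo)
      then show ?case by blast
    qed
  qed
  show "{Q 0 q r q 0 r | q r. True} \<subseteq> modK"
  proof
    fix u assume "u \<in> {Q 0 q r q 0 r | q r. True}"
    then obtain q r where u: "u = Q 0 q r q 0 r" by blast
    have m: "act (mk a b c) theta \<in> subgen theta" for a b c by (rule sg_act) (simp_all add: sg_gen)
    have "smult r theta + smult q (theta + act (mk 0 0 1) theta) \<in> subgen theta"
      by (intro sg_add sg_smult m sg_gen)
    moreover have "smult r theta + smult q (theta + act (mk 0 0 1) theta) = u"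
      unfolding u theta_Q act_mk_Q Q_add smult_Q Q_inj by (simp add: bitdec; argo)
    ultimately show "u \<in> modK" unfolding modK_def by simp
  qed
qed

lemma submod_step: "is_submod W \<Longrightarrow> u \<in> W \<Longrightarrow> u + act (mk a b c) u \<in> W"
  unfolding is_submod_def by simp

lemma keyN:
  assumes W: "is_submod W" and uW: "u \<in> W" and uN: "u \<in> modN" and nz: "u \<noteq> 0"
  shows "Q 1 0 0 0 0 0 \<in> W"
proof -
  obtain p q r s where u: "u = Q p q r 0 s s" using uN by (auto simp: modN_eq)
  have e1: "u + act (mk 1 0 0) u = Q q 0 s 0 0 0"
    unfolding u act_mk_Q Q_add Q_inj by (simp add: bitdec; argo)
  have w1: "Q q 0 s 0 0 0 \<in> W" using submod_step[OF W uW, of 1 0 0] e1 by simp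
  have e2: "Q q 0 s 0 0 0 + act (mk 0 1 0) (Q q 0 s 0 0 0) = Q s 0 0 0 0 0"
    unfolding act_mk_Q Q_add Q_inj by (simp add: bitdec; argo)
  have w2: "Q s 0 0 0 0 0 \<in> W" using submod_step[OF W w1, of 0 1 0] e2 by simp
  have e3: "u + act (mk 0 1 0) u = Q (r+s) s 0 0 0 0"
    unfolding u act_mk_Q Q_add Q_inj by (simp add: bitdec; argo)
  have w3: "Q (r+s) s 0 0 0 0 \<in> W" using submod_step[OF W uW, of 0 1 0] e3 by simp
  show ?thesis
  proof (cases "s = 1")
    case True then show ?thesis using w2 by simp
  next
    case False
    then have s0: "s = 0" by (simp add: bit_not_one_iff)
    show ?thesis
    proof (cases "r = 1")
      case True then show ?thesis using w3 s0 by simp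
    next
      case False
    then have r0: "r = 0" by (simp add: bit_not_one_iff)
      show ?thesis
      proof (cases "q = 1")
        case True then show ?thesis using w1 s0 by simp
      next
        case False
    then have q0: "q = 0" by (simp add: bit_not_one_iff)
        show ?thesis
        proof (cases "p = 1")
          case False then show ?thesis using nz u s0 r0 q0 Q_zeros by (simp add: bit_not_one_iff)
        next
          case True then show ?thesis using uW u s0 r0 q0 by simp
        qed
      qed
    qed
  qed
qed

lemma keyK:
  assumes W: "is_submod W" and uW: "u \<in> W" and uK: "u \<in> modK" and nz: "u \<noteq> 0"
  shows "Q 0 1 0 1 0 0 \<in> W"
proof -
  obtain q r where u: "u = Q 0 q r q 0 r" using uK by (auto simp: modK_eq)
  have e1: "u + act (mk 0 0 1) u = Q 0 r 0 r 0 0"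
    unfolding u act_mk_Q Q_add Q_inj by (simp add: bitdec; argo)
  have w1: "Q 0 r 0 r 0 0 \<in> W" using submod_step[OF W uW, of 0 0 1] e1 by simp
  show ?thesis
  proof (cases "r = 1")
    case True then show ?thesis using w1 by simp
  next
    case False
    then have r0: "r = 0" by (simp add: bit_not_one_iff)
    show ?thesis
    proof (cases "q = 1")
      case False then show ?thesis using nz u r0 Q_zeros by (simp add: bit_not_one_iff)
    next
      case True then show ?thesis using uW u r0 by simp
    qed
  qed
qed

lemma socleN: "socle modN = {smult c (d1 ^ 2) | c. True}"
  unfolding d1sq_Q
proof (rule socle_gen)
  show "0 \<in> modN" by (simp add: modN_def sg_zero)
  show "Q 1 0 0 0 0 0 \<in> modN" unfolding modN_eq by blast
  show "Q 1 0 0 0 0 0 \<noteq> 0" using Q_zeros Q_inj by (metis zero_neq_one)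
  show "\<forall>g\<in>U3. act g (Q 1 0 0 0 0 0) = Q 1 0 0 0 0 0"
    by (auto simp: U3_mk act_mk_Q)
  show "\<And>W u. is_submod W \<Longrightarrow> u \<in> W \<Longrightarrow> u \<in> modN \<Longrightarrow> u \<noteq> 0 \<Longrightarrow> Q 1 0 0 0 0 0 \<in> W"
    by (rule keyN)
qed

lemma socleK: "socle modK = {smult c d2 | c. True}"
  unfolding d2_Q
proof (rule socle_gen)
  show "0 \<in> modK" by (simp add: modK_def sg_zero)
  show "Q 0 1 0 1 0 0 \<in> modK" unfolding modK_eq by blast
  show "Q 0 1 0 1 0 0 \<noteq> 0" using Q_zeros Q_inj by (metis zero_neq_one)
  show "\<forall>g\<in>U3. act g (Q 0 1 0 1 0 0) = Q 0 1 0 1 0 0"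
    by (auto simp: U3_mk act_mk_Q Q_inj bitdec)
  show "\<And>W u. is_submod W \<Longrightarrow> u \<in> W \<Longrightarrow> u \<in> modK \<Longrightarrow> u \<noteq> 0 \<Longrightarrow> Q 0 1 0 1 0 0 \<in> W"
    by (rule keyK)
qed


lemma bit_xx: "(x::bit) + x = 0" by (cases x) simp_all
lemma bit_xxy: "(x::bit) + (x + y) = y" by (cases x; cases y) simp_all
lemma bit_mm: "(x::bit) * x = x" by (cases x) simp_all
lemma bit_mmy: "(x::bit) * (x * y) = x * y" by (cases x; cases y) simp_all
lemmas bitring = algebra_simps bit_xx bit_xxy bit_mm bit_mmy

lemma mk_entries'[simp]: "mk a b c 0 (Suc 0) = a" "mk a b c (Suc 0) 2 = c"
  by (simp_all add: mk_def)

abbreviation lk :: "kpoly \<Rightarrow> nat \<times> nat \<times> nat \<Rightarrow> bit" where "lk \<equiv> Poly_Mapping.lookup"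

lemma lk_smult: "lk (smult c u) m = c * lk u m"
  by (cases c) (simp_all add: smult_def)

definition lamN :: "mat3 \<Rightarrow> kpoly \<Rightarrow> bit" where
  "lamN g u = (1 + (g 0 2 + g 0 1 * g 1 2)) * (1 + g 0 1) * lk u (0,0,2) + lk u (2,0,0)
     + (1 + (g 0 2 + g 0 1 * g 1 2)) * lk u (1,0,1) + g 0 1 * lk u (1,1,0)"

definition PhiN :: "kpoly \<Rightarrow> mat3 set \<Rightarrow> bit" where
  "PhiN u = (\<lambda>C. if C \<in> lcosets H2 then lamN (SOME g. g \<in> C) u else 0)"

lemma cos2_in[simp]: "cos2 a b c \<in> lcosets H2"
  unfolding lcosets_H2 by blast

lemma lamN_mk: "lamN (mk a b c) u = (1 + (b + a * c)) * (1 + a) * lk u (0,0,2) + lk u (2,0,0)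
     + (1 + (b + a*c)) * lk u (1,0,1) + a * lk u (1,1,0)"
  unfolding lamN_def mk_entries ..

lemma some_cos2: "lamN (SOME g. g \<in> cos2 a b c) = lamN (mk a b c)"
proof -
  have "mk a b c \<in> cos2 a b c" by (simp add: cos2_def)
  then have "(SOME g. g \<in> cos2 a b c) \<in> cos2 a b c" by (metis someI)
  then have "(SOME g. g \<in> cos2 a b c) = mk a b c \<or> (SOME g. g \<in> cos2 a b c) = mk a (b+a) (c+1)"
    by (simp add: cos2_def)
  moreover have "lamN (mk a (b+a) (c+1)) = lamN (mk a b c)"
    by (rule ext) (simp only: lamN_mk; simp add: bitring)
  ultimately show ?thesis by auto
qed

lemma PhiN_val: "PhiN (Q p1 p2 p3 p4 p5 p6) (cos2 a b c) =
   (1 + (b + a*c)) * (1 + a) * p6 + p1 + (1 + (b + a*c)) * p3 + a * p2"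
  unfolding PhiN_def some_cos2 lamN_mk lookup_Q by simp

lemma cos2_reps: "cos2 0 0 1 = cos2 0 0 0" "cos2 0 1 1 = cos2 0 1 0"
   "cos2 1 1 0 = cos2 1 0 1" "cos2 1 1 1 = cos2 1 0 0"
  by (auto simp: cos2_def)

lemma img_cos2: "mmul (mk a b c) ` cos2 a' b' c' = cos2 (a+a') (b+b'+a*c') (c+c')"
proof -
  have "mk (a+a') (b+(b'+a')+a*(c'+1)) (c+(c'+1)) = mk (a+a') ((b+b'+a*c')+(a+a')) ((c+c')+1)"
    by (simp add: mk_inj bitring)
  then show ?thesis by (simp add: cos2_def mk_mul)
qed

lemma isoN: "iso_perm modN H2"
  unfolding iso_perm_def
proof (intro exI[of _ PhiN] conjI ballI allI)
  show "bij_betw PhiN modN (permmod H2)"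
    unfolding bij_betw_def
  proof
    show "inj_on PhiN modN"
    proof
      fix u w assume "u \<in> modN" "w \<in> modN" and e: "PhiN u = PhiN w"
      then obtain p q r s p' q' r' s' where u: "u = Q p q r 0 s s" and w: "w = Q p' q' r' 0 s' s'"
        by (auto simp: modN_eq)
      have "PhiN u (cos2 0 0 0) = PhiN w (cos2 0 0 0)" "PhiN u (cos2 0 1 0) = PhiN w (cos2 0 1 0)"
        "PhiN u (cos2 1 0 0) = PhiN w (cos2 1 0 0)" "PhiN u (cos2 1 0 1) = PhiN w (cos2 1 0 1)"
        using e by simp_all
      then have "p = p' \<and> q = q' \<and> r = r' \<and> s = s'"
        unfolding u w PhiN_val by (simp add: bitring)
      then show "u = w" using u w by simp
    qed
    show "PhiN ` modN = permmod H2"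
    proof
      show "PhiN ` modN \<subseteq> permmod H2" by (auto simp: permmod_def PhiN_def)
      show "permmod H2 \<subseteq> PhiN ` modN"
      proof
        fix f assume f: "f \<in> permmod H2"
        define p where "p = f (cos2 0 1 0)"
        define q where "q = f (cos2 1 0 1) + p"
        define r where "r = f (cos2 1 0 0) + p + q"
        define s where "s = f (cos2 0 0 0) + p + r"
        have uN: "Q p q r 0 s s \<in> modN" by (auto simp: modN_eq)
        have "PhiN (Q p q r 0 s s) = f"
        proof
          fix C
          show "PhiN (Q p q r 0 s s) C = f C"
          proof (cases "C \<in> lcosets H2")
            case True
            then obtain a b c where C: "C = cos2 a b c" by (auto simp: lcosets_H2)
            show ?thesis unfolding C
              by (cases a; cases b; cases c; simp only: cos2_reps PhiN_val p_def q_def r_def s_def;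
                  simp add: bitring)
          next
            case False
            then show ?thesis using f by (simp add: PhiN_def permmod_def)
          qed
        qed
        then show "f \<in> PhiN ` modN" using uN by force
      qed
    qed
  qed
  show "PhiN (u + w) = (\<lambda>C. PhiN u C + PhiN w C)" for u w
    by (rule ext) (simp add: PhiN_def lamN_def lookup_add algebra_simps)
  show "PhiN (smult c u) = (\<lambda>C. c * PhiN u C)" for c u
    by (rule ext) (simp add: PhiN_def lamN_def lk_smult algebra_simps)
  fix g u C assume g: "g \<in> U3" and u: "u \<in> modN" and C: "C \<in> lcosets H2"
  obtain a b c where g: "g = mk a b c" using g by (rule U3_cases)
  obtain p q r s where u: "u = Q p q r 0 s s" using u by (auto simp: modN_eq)
  obtain a' b' c' where C: "C = cos2 a' b' c'" using C by (auto simp: lcosets_H2)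
  show "PhiN (act g u) (mmul g ` C) = PhiN u C"
    unfolding g u C img_cos2 act_mk_Q PhiN_val by (simp add: bitring)
qed


definition lamK :: "mat3 \<Rightarrow> kpoly \<Rightarrow> bit" where
  "lamK g u = (1 + g 1 2) * lk u (0,0,2) + lk u (0,2,0)"

definition PhiK :: "kpoly \<Rightarrow> mat3 set \<Rightarrow> bit" where
  "PhiK u = (\<lambda>C. if C \<in> lcosets H1 then lamK (SOME g. g \<in> C) u else 0)"

lemma cos1_in[simp]: "cos1 c \<in> lcosets H1"
  unfolding lcosets_H1 by blast

lemma some_cos1: "lamK (SOME g. g \<in> cos1 c) = lamK (mk 0 0 c)"
proof -
  have "mk 0 0 c \<in> cos1 c" by (auto simp: cos1_def)
  then have "(SOME g. g \<in> cos1 c) \<in> cos1 c" by (metis someI)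
  then obtain x y where "(SOME g. g \<in> cos1 c) = mk x y c" by (auto simp: cos1_def)
  then show ?thesis by (simp add: lamK_def fun_eq_iff)
qed

lemma PhiK_val: "PhiK (Q p1 p2 p3 p4 p5 p6) (cos1 c) = (1 + c) * p6 + p4"
  unfolding PhiK_def some_cos1 by (simp add: lamK_def lookup_Q)

lemma img_cos1: "mmul (mk a b c) ` cos1 c' = cos1 (c+c')"
proof
  show "mmul (mk a b c) ` cos1 c' \<subseteq> cos1 (c+c')" by (auto simp: cos1_def mk_mul; blast)
  show "cos1 (c+c') \<subseteq> mmul (mk a b c) ` cos1 c'"
  proof
    fix g assume "g \<in> cos1 (c+c')"
    then obtain x y where g: "g = mk x y (c+c')" by (auto simp: cos1_def)
    have "g = mmul (mk a b c) (mk (x+a) (y+b+a*c') c')" unfolding g mk_mul mk_inj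
      by (simp add: bitring)
    moreover have "mk (x+a) (y+b+a*c') c' \<in> cos1 c'" by (auto simp: cos1_def)
    ultimately show "g \<in> mmul (mk a b c) ` cos1 c'" by blast
  qed
qed

lemma isoK: "iso_perm modK H1"
  unfolding iso_perm_def
proof (intro exI[of _ PhiK] conjI ballI allI)
  show "bij_betw PhiK modK (permmod H1)"
    unfolding bij_betw_def
  proof
    show "inj_on PhiK modK"
    proof
      fix u w assume "u \<in> modK" "w \<in> modK" and e: "PhiK u = PhiK w"
      then obtain q r q' r' where u: "u = Q 0 q r q 0 r" and w: "w = Q 0 q' r' q' 0 r'"
        by (auto simp: modK_eq)
      have "PhiK u (cos1 0) = PhiK w (cos1 0)" "PhiK u (cos1 1) = PhiK w (cos1 1)"
        using e by simp_all
      then have "q = q' \<and> r = r'"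
        unfolding u w PhiK_val by (simp add: bitring)
      then show "u = w" using u w by simp
    qed
    show "PhiK ` modK = permmod H1"
    proof
      show "PhiK ` modK \<subseteq> permmod H1" by (auto simp: permmod_def PhiK_def)
      show "permmod H1 \<subseteq> PhiK ` modK"
      proof
        fix f assume f: "f \<in> permmod H1"
        define q where "q = f (cos1 1)"
        define r where "r = f (cos1 0) + q"
        have uK: "Q 0 q r q 0 r \<in> modK" by (auto simp: modK_eq)
        have "PhiK (Q 0 q r q 0 r) = f"
        proof
          fix C
          show "PhiK (Q 0 q r q 0 r) C = f C"
          proof (cases "C \<in> lcosets H1")
            case True
            then obtain c where C: "C = cos1 c" by (auto simp: lcosets_H1)
            show ?thesis unfolding C
              by (cases c; simp only: PhiK_val q_def r_def; simp add: bitring)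
          next
            case False
            then show ?thesis using f by (simp add: PhiK_def permmod_def)
          qed
        qed
        then show "f \<in> PhiK ` modK" using uK by force
      qed
    qed
  qed
  show "PhiK (u + w) = (\<lambda>C. PhiK u C + PhiK w C)" for u w
    by (rule ext) (simp add: PhiK_def lamK_def lookup_add algebra_simps)
  show "PhiK (smult c u) = (\<lambda>C. c * PhiK u C)" for c u
    by (rule ext) (simp add: PhiK_def lamK_def lk_smult algebra_simps)
  fix g u C assume g: "g \<in> U3" and u: "u \<in> modK" and C: "C \<in> lcosets H1"
  obtain a b c where g: "g = mk a b c" using g by (rule U3_cases)
  obtain q r where u: "u = Q 0 q r q 0 r" using u by (auto simp: modK_eq)
  obtain c' where C: "C = cos1 c'" using C by (auto simp: lcosets_H1)
  show "PhiK (act g u) (mmul g ` C) = PhiK u C"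
    unfolding g u C img_cos1 act_mk_Q PhiK_val by (simp add: bitring)
qed

theorem lemma4p5:
  shows "iso_perm modN H2 \<and> socle modN = {smult c (d1 ^ 2) | c. True}
       \<and> iso_perm modK H1 \<and> socle modK = {smult c d2 | c. True}"
  using isoN socleN isoK socleK by blast


end
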